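(* Let $(B,\lfloor\cdot,\cdot\rfloor,\|\cdot\|)$ be an SSDB space, $q(b):=\tfrac12\lfloor b,b\rfloor$, let $f\colon B\to\,]{-}\infty,\infty]$ be a proper convex lower semicontinuous BC--function and $g\colon B\to\,]{-}\infty,\infty]$ a proper convex lower semicontinuous TBC--function. Then $\mathrm{dom}\,f-\mathrm{dom}\,g=B$ if and only if ${\cal P}_q(f)-{\cal N}_q(g)=B$.
   Context: An SSDB space is a triple $(B,\lfloor\cdot,\cdot\rfloor,\|\cdot\|)$ where $B$ is a nonzero real vector space, $\lfloor\cdot,\cdot\rfloor$ a symmetric bilinear form, $(B,\|\cdot\|)$ a Banach space, and there is a linear isometry $\iota$ of $B$ onto $B^*$ with $\langle b,\iota(c)\rangle=\lfloor b,c\rfloor$. $\mathrm{dom}\,f:=\{b\colon f(b)\in\mathbb{R}\}$, $f^@(c):=\sup_{b}[\lfloor b,c\rfloor-f(b)]$. A BC--function is a proper convex $f$ with $f^@(b)\ge f(b)\ge q(b)$ for all $b$; a TBC--function is a proper convex $g$ with $g^@(-b)\ge g(b)\ge -q(b)$ for all $b$. ${\cal P}_q(f):=\{b\colon f(b)=q(b)\}$, ${\cal N}_q(g):=\{b\colon g(b)=-q(b)\}$. *)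

theory Defs
  imports "HOL-Analysis.Analysis" "HOL-Library.Extended_Real"
begin

definition SSDB :: "('a::banach \<Rightarrow> 'a \<Rightarrow> real) \<Rightarrow> bool" where
  "SSDB bf \<longleftrightarrow> (\<exists>b::'a. b \<noteq> 0) \<and> bilinear bf \<and> (\<forall>b c. bf b c = bf c b) \<and>
     (\<exists>\<iota> :: 'a \<Rightarrow> ('a \<Rightarrow>\<^sub>L real). linear \<iota> \<and> surj \<iota> \<and>
        (\<forall>c. norm (\<iota> c) = norm c) \<and> (\<forall>b c. blinfun_apply (\<iota> c) b = bf b c))"

definition qf :: "('a \<Rightarrow> 'a \<Rightarrow> real) \<Rightarrow> 'a \<Rightarrow> real" where
  "qf bf b = bf b b / 2"

text \<open>Functions B \<rightarrow> ]-\<infinity>,\<infinity>] are modelled as ereal-valued functions never equal to -\<infinity>.\<close>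
definition proper_fn :: "('a \<Rightarrow> ereal) \<Rightarrow> bool" where
  "proper_fn f \<longleftrightarrow> (\<forall>x. f x \<noteq> -\<infinity>) \<and> (\<exists>x. f x \<noteq> \<infinity>)"

definition convex_fn :: "('a::real_vector \<Rightarrow> ereal) \<Rightarrow> bool" where
  "convex_fn f \<longleftrightarrow> (\<forall>x y t. 0 < t \<and> t < 1 \<longrightarrow>
      f (t *\<^sub>R x + (1 - t) *\<^sub>R y) \<le> ereal t * f x + ereal (1 - t) * f y)"

definition lsc_fn :: "('a::topological_space \<Rightarrow> ereal) \<Rightarrow> bool" where
  "lsc_fn f \<longleftrightarrow> (\<forall>r::real. closed {x. f x \<le> ereal r})"

definition dom_fn :: "('a \<Rightarrow> ereal) \<Rightarrow> 'a set" where
  "dom_fn f = {b. \<exists>r. f b = ereal r}"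

definition conj_at :: "('a \<Rightarrow> 'a \<Rightarrow> real) \<Rightarrow> ('a \<Rightarrow> ereal) \<Rightarrow> 'a \<Rightarrow> ereal" where
  "conj_at bf f c = (SUP b. ereal (bf b c) - f b)"

definition BC_fn :: "('a::real_vector \<Rightarrow> 'a \<Rightarrow> real) \<Rightarrow> ('a \<Rightarrow> ereal) \<Rightarrow> bool" where
  "BC_fn bf f \<longleftrightarrow> proper_fn f \<and> convex_fn f \<and>
     (\<forall>b. conj_at bf f b \<ge> f b \<and> f b \<ge> ereal (qf bf b))"

definition TBC_fn :: "('a::real_vector \<Rightarrow> 'a \<Rightarrow> real) \<Rightarrow> ('a \<Rightarrow> ereal) \<Rightarrow> bool" where
  "TBC_fn bf g \<longleftrightarrow> proper_fn g \<and> convex_fn g \<and>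
     (\<forall>b. conj_at bf g (- b) \<ge> g b \<and> g b \<ge> ereal (- qf bf b))"

definition Pq :: "('a \<Rightarrow> 'a \<Rightarrow> real) \<Rightarrow> ('a \<Rightarrow> ereal) \<Rightarrow> 'a set" where
  "Pq bf f = {b. f b = ereal (qf bf b)}"

definition Nq :: "('a \<Rightarrow> 'a \<Rightarrow> real) \<Rightarrow> ('a \<Rightarrow> ereal) \<Rightarrow> 'a set" where
  "Nq bf g = {b. g b = ereal (- qf bf b)}"

end

theory Submission
  imports Defs
begin

definition sublin :: "('a::real_vector \<Rightarrow> real) \<Rightarrow> bool" where
  "sublin p \<longleftrightarrow> (\<forall>x y. p (x + y) \<le> p x + p y) \<and> (\<forall>t x. 0 < t \<longrightarrow> p (t *\<^sub>R x) = t * p x)"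

lemma sublin_0: "sublin p \<Longrightarrow> p 0 = 0"
proof -
  assume "sublin p"
  hence "p ((2::real) *\<^sub>R 0) = 2 * p 0" unfolding sublin_def by (metis zero_less_numeral)
  thus "p 0 = 0" by simp
qed

lemma sublin_neg: "sublin p \<Longrightarrow> 0 \<le> p x + p (- x)"
  using sublin_0[of p] unfolding sublin_def by (metis add.right_inverse)

lemma cInf_scale:
  fixes S :: "real set"
  assumes "S \<noteq> {}" "bdd_below S" "0 < s"
  shows "Inf ((\<lambda>a. s * a) ` S) = s * Inf S"
proof (rule antisym)
  have bb: "bdd_below ((\<lambda>a. s * a) ` S)"
    using assms by (metis (no_types, lifting) bdd_below.unfold image_iff mult_left_mono less_imp_le)
  have "Inf ((\<lambda>a. s * a) ` S) / s \<le> Inf S"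
  proof (rule cInf_greatest[OF assms(1)])
    fix a assume "a \<in> S"
    hence "Inf ((\<lambda>a. s * a) ` S) \<le> s * a" by (intro cInf_lower[OF _ bb]) auto
    thus "Inf ((\<lambda>a. s * a) ` S) / s \<le> a" using assms(3) by (simp add: divide_le_eq mult.commute)
  qed
  thus "Inf ((\<lambda>a. s * a) ` S) \<le> s * Inf S" using assms(3) by (simp add: divide_le_eq mult.commute)
  show "s * Inf S \<le> Inf ((\<lambda>a. s * a) ` S)"
    using assms by (intro cInf_greatest) (auto intro!: mult_left_mono cInf_lower)
qed

lemma cInf_add_le:
  fixes S T :: "real set"
  assumes "S \<noteq> {}" "T \<noteq> {}" "\<And>a b. a \<in> S \<Longrightarrow> b \<in> T \<Longrightarrow> v \<le> a + b"
  shows "v \<le> Inf S + Inf T"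
proof -
  have "v - Inf T \<le> Inf S"
  proof (rule cInf_greatest[OF assms(1)])
    fix a assume a: "a \<in> S"
    have "\<And>b. b \<in> T \<Longrightarrow> v - a \<le> b" using assms(3) a by (smt (verit))
    hence "v - a \<le> Inf T" using assms(2) by (intro cInf_greatest) auto
    thus "v - Inf T \<le> a" by simp
  qed
  thus ?thesis by simp
qed

definition Ep :: "('a \<Rightarrow> real) \<Rightarrow> ('a \<times> real) set" where
  "Ep q = {(x, r). q x < r}"

lemma Ep_sub: "Ep q1 \<subseteq> Ep q2 \<longleftrightarrow> (\<forall>x. q2 x \<le> q1 x)"
proof
  assume h: "Ep q1 \<subseteq> Ep q2"
  show "\<forall>x. q2 x \<le> q1 x"
  proof (rule ccontr)
    assume "\<not> ?thesis" then obtain x where "q1 x < q2 x" by (auto simp: not_le)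
    hence "(x, (q1 x + q2 x)/2) \<in> Ep q1" "(x, (q1 x + q2 x)/2) \<notin> Ep q2" by (auto simp: Ep_def)
    thus False using h by blast
  qed
qed (auto simp: Ep_def intro: le_less_trans)

lemma minimal_sublin:
  fixes p :: "'a::real_vector \<Rightarrow> real"
  assumes "sublin p"
  shows "\<exists>q. sublin q \<and> (\<forall>x. q x \<le> p x) \<and> (\<forall>q'. sublin q' \<and> (\<forall>x. q' x \<le> q x) \<longrightarrow> q' = q)"
proof -
  define A where "A = {Ep q | q. sublin q \<and> (\<forall>x. q x \<le> p x)}"
  have "\<exists>M\<in>A. \<forall>X\<in>A. M \<subseteq> X \<longrightarrow> X = M"
  proof (rule Zorn_Lemma2, intro ballI)
    fix C assume C: "C \<in> chains A"
    show "\<exists>U\<in>A. \<forall>X\<in>C. X \<subseteq> U"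
    proof (cases "C = {}")
      case True thus ?thesis using assms by (auto simp: A_def)
    next
      case False
      define Q where "Q = {q. sublin q \<and> (\<forall>x. q x \<le> p x) \<and> Ep q \<in> C}"
      have CQ: "C = Ep ` Q" using chainsD2[OF C] by (auto simp: Q_def A_def)
      then obtain q1 where q1: "q1 \<in> Q" using False by auto
      have chain: "(\<forall>x. q' x \<le> q x) \<or> (\<forall>x. q x \<le> q' x)" if "q \<in> Q" "q' \<in> Q" for q q'
        using chainsD[OF C, of "Ep q" "Ep q'"] that by (auto simp: Q_def Ep_sub)
      have lb: "- p (- x) \<le> q x" if "q \<in> Q" for q x
        using that sublin_neg[of q x] by (auto simp: Q_def) (smt (verit))
      define qi where "qi x = Inf ((\<lambda>q. q x) ` Q)" for x
      have ne: "(\<lambda>q. q x) ` Q \<noteq> {}" for x using q1 by auto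
      have bb: "bdd_below ((\<lambda>q. q x) ` Q)" for x using lb by (auto simp: bdd_below_def)
      have qi_le: "qi x \<le> q x" if "q \<in> Q" for q x
        unfolding qi_def using that bb by (intro cInf_lower) auto
      have "sublin qi"
        unfolding sublin_def
      proof (intro conjI allI impI)
        fix x y
        show "qi (x + y) \<le> qi x + qi y"
          unfolding qi_def[of x] qi_def[of y]
        proof (rule cInf_add_le[OF ne ne])
          fix a b assume "a \<in> (\<lambda>q. q x) ` Q" "b \<in> (\<lambda>q. q y) ` Q"
          then obtain qa qb where qa: "qa \<in> Q" "a = qa x" and qb: "qb \<in> Q" "b = qb y" by auto
          have sa: "sublin qa" and sb: "sublin qb" using qa qb by (auto simp: Q_def)
          from chain[OF qa(1) qb(1)] show "qi (x + y) \<le> a + b"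
          proof
            assume "\<forall>x. qb x \<le> qa x"
            hence "qb (x+y) \<le> a + b" using sb qa qb unfolding sublin_def by (smt (verit))
            thus ?thesis using qi_le[OF qb(1)] by (smt (verit))
          next
            assume "\<forall>x. qa x \<le> qb x"
            hence "qa (x+y) \<le> a + b" using sa qa qb unfolding sublin_def by (smt (verit))
            thus ?thesis using qi_le[OF qa(1)] by (smt (verit))
          qed
        qed
      next
        fix t :: real and x assume t: "0 < t"
        have "(\<lambda>q. q (t *\<^sub>R x)) ` Q = (\<lambda>a. t * a) ` ((\<lambda>q. q x) ` Q)"
          using t by (force simp: Q_def sublin_def image_image)
        thus "qi (t *\<^sub>R x) = t * qi x" unfolding qi_def using cInf_scale[OF ne bb t] by simp
      qed
      moreover have "\<forall>x. qi x \<le> p x" using qi_le q1 by (smt (verit) Q_def mem_Collect_eq)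
      ultimately have "Ep qi \<in> A" by (auto simp: A_def)
      moreover have "\<forall>X\<in>C. X \<subseteq> Ep qi" using CQ qi_le by (auto simp: Ep_sub)
      ultimately show ?thesis by blast
    qed
  qed
  then obtain q where q: "sublin q" "\<forall>x. q x \<le> p x" and max: "\<forall>X\<in>A. Ep q \<subseteq> X \<longrightarrow> X = Ep q"
    by (auto simp: A_def)
  have "q' = q" if "sublin q'" "\<forall>x. q' x \<le> q x" for q'
  proof -
    have "\<forall>x. q' x \<le> p x" using that q by (meson order_trans)
    hence "Ep q' \<in> A" using that by (auto simp: A_def)
    moreover have "Ep q \<subseteq> Ep q'" using that by (simp add: Ep_sub)
    ultimately have "Ep q' = Ep q" using max by blast
    hence "\<forall>x. q x \<le> q' x" "\<forall>x. q' x \<le> q x" by (metis Ep_sub order_refl)+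
    thus ?thesis by (intro ext antisym) auto
  qed
  thus ?thesis using q by blast
qed

lemma minimal_sublin_linear:
  fixes q :: "'a::real_vector \<Rightarrow> real"
  assumes q: "sublin q" and min: "\<forall>q'. sublin q' \<and> (\<forall>x. q' x \<le> q x) \<longrightarrow> q' = q"
  shows "linear q"
proof -
  have add: "q (x + y) \<le> q x + q y" for x y using q by (simp add: sublin_def)
  have hom: "0 < t \<Longrightarrow> q (t *\<^sub>R x) = t * q x" for t x using q by (simp add: sublin_def)
  have q0: "q 0 = 0" using sublin_0[OF q] .
  have homle: "0 \<le> t \<Longrightarrow> q (t *\<^sub>R x) = t * q x" for t x using hom q0 by (cases "t = 0") auto
  have negle: "q (- y) \<le> - q y" for y
  proof -
    define S where "S x = (\<lambda>t. q (x + t *\<^sub>R y) - t * q y) ` {0..}" for x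
    define qy where "qy x = Inf (S x)" for x
    have ne: "S x \<noteq> {}" for x by (auto simp: S_def)
    have lbS: "- q (- x) \<le> a" if aS: "a \<in> S x" for a x
    proof -
      obtain t where t: "0 \<le> t" "a = q (x + t *\<^sub>R y) - t * q y" using aS unfolding S_def by auto
      have "q (t *\<^sub>R y) \<le> q (x + t *\<^sub>R y) + q (- x)" using add[of "x + t *\<^sub>R y" "- x"] by simp
      thus ?thesis using t homle[OF t(1)] by simp
    qed
    have bb: "bdd_below (S x)" for x using lbS by (auto simp: bdd_below_def)
    have qy_le: "qy x \<le> q (x + t *\<^sub>R y) - t * q y" if "0 \<le> t" for x t
      unfolding qy_def by (rule cInf_lower[OF _ bb]) (use that in \<open>auto simp: S_def\<close>)
    have "sublin qy" unfolding sublin_def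
    proof (intro conjI allI impI)
      fix x1 x2
      show "qy (x1 + x2) \<le> qy x1 + qy x2"
        unfolding qy_def[of x1] qy_def[of x2]
      proof (rule cInf_add_le[OF ne ne])
        fix a b assume "a \<in> S x1" "b \<in> S x2"
        then obtain t1 t2 where t: "0 \<le> t1" "a = q (x1 + t1 *\<^sub>R y) - t1 * q y"
          "0 \<le> t2" "b = q (x2 + t2 *\<^sub>R y) - t2 * q y" by (auto simp: S_def)
        have "q (x1 + x2 + (t1 + t2) *\<^sub>R y) \<le> q (x1 + t1 *\<^sub>R y) + q (x2 + t2 *\<^sub>R y)"
          using add[of "x1 + t1 *\<^sub>R y" "x2 + t2 *\<^sub>R y"] by (simp add: algebra_simps)
        hence "q (x1 + x2 + (t1 + t2) *\<^sub>R y) - (t1 + t2) * q y \<le> a + b" using t by (simp add: algebra_simps)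
        thus "qy (x1 + x2) \<le> a + b" using qy_le[of "t1 + t2" "x1 + x2"] t by simp
      qed
    next
      fix s :: real and x assume s: "0 < s"
      have "S (s *\<^sub>R x) = (\<lambda>a. s * a) ` S x"
      proof (intro set_eqI iffI)
        fix a assume "a \<in> S (s *\<^sub>R x)"
        then obtain t where t: "0 \<le> t" "a = q (s *\<^sub>R x + t *\<^sub>R y) - t * q y" by (auto simp: S_def)
        have e: "s *\<^sub>R x + t *\<^sub>R y = s *\<^sub>R (x + (t / s) *\<^sub>R y)" using s by (simp add: algebra_simps)
        have h1: "q (s *\<^sub>R x + t *\<^sub>R y) = s * q (x + (t / s) *\<^sub>R y)" unfolding e by (rule hom[OF s])
        have h2: "s * ((t / s) * q y) = t * q y" using s by simp
        have "a = s * (q (x + (t / s) *\<^sub>R y) - (t / s) * q y)"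
          unfolding t(2) h1 right_diff_distrib h2 ..
        moreover have "q (x + (t / s) *\<^sub>R y) - (t / s) * q y \<in> S x" unfolding S_def
          by (rule image_eqI[where x="t / s"]) (use t s in auto)
        ultimately show "a \<in> (\<lambda>a. s * a) ` S x" by blast
      next
        fix a assume "a \<in> (\<lambda>a. s * a) ` S x"
        then obtain t where t: "0 \<le> t" "a = s * (q (x + t *\<^sub>R y) - t * q y)" by (auto simp: S_def)
        have e: "s *\<^sub>R x + (s * t) *\<^sub>R y = s *\<^sub>R (x + t *\<^sub>R y)" by (simp add: algebra_simps)
        have h1: "q (s *\<^sub>R x + (s * t) *\<^sub>R y) = s * q (x + t *\<^sub>R y)" unfolding e by (rule hom[OF s])
        have "a = q (s *\<^sub>R x + (s * t) *\<^sub>R y) - (s * t) * q y"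
          unfolding t(2) h1 right_diff_distrib by simp
        moreover have "0 \<le> s * t" using s t by simp
        ultimately show "a \<in> S (s *\<^sub>R x)" unfolding S_def by blast
      qed
      thus "qy (s *\<^sub>R x) = s * qy x" unfolding qy_def using cInf_scale[OF ne bb s] by simp
    qed
    moreover have "\<forall>x. qy x \<le> q x" using qy_le[of 0] by simp
    ultimately have "qy = q" using min by blast
    hence "q (- y) = qy (- y)" by simp
    also have "\<dots> \<le> q (- y + 1 *\<^sub>R y) - 1 * q y" by (rule qy_le) simp
    finally show ?thesis by (simp add: q0)
  qed
  have neg: "q (- y) = - q y" for y
    using negle[of y] add[of y "- y"] q0 by simp
  show "linear q"
  proof (rule linearI)
    fix x y show "q (x + y) = q x + q y"
    proof -
      have "q (- x + - y) \<le> q (- x) + q (- y)" by (rule add)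
      moreover have "- x + - y = - (x + y)" by simp
      ultimately have "q (- (x + y)) \<le> q (- x) + q (- y)" by simp
      thus ?thesis using add[of x y] neg[of x] neg[of y] neg[of "x + y"] by linarith
    qed
  next
    fix t :: real and x show "q (t *\<^sub>R x) = t *\<^sub>R q x"
    proof (cases "0 \<le> t")
      case True thus ?thesis using homle by simp
    next
      case False
      hence "q (t *\<^sub>R x) = q (- ((- t) *\<^sub>R x))" by simp
      also have "\<dots> = - ((- t) * q x)" using neg homle[of "- t" x] False by simp
      finally show ?thesis by simp
    qed
  qed
qed

lemma hahn_banach_sublin:
  fixes p :: "'a::real_vector \<Rightarrow> real"
  assumes "sublin p"
  shows "\<exists>l. linear l \<and> (\<forall>x. l x \<le> p x)"
  using minimal_sublin[OF assms] minimal_sublin_linear by blast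

lemma convex_partial_geom:
  fixes K :: "'v::real_vector set"
  assumes cK: "convex K" and K0: "0 \<in> K" and kK: "\<And>n. k n \<in> K"
  shows "(\<Sum>n<N. ((1/2)^(Suc n)) *\<^sub>R k n) \<in> K"
proof -
  have "\<exists>u\<in>K. (\<Sum>n<N. ((1/2)^(Suc n)) *\<^sub>R k n) = (1 - (1/2)^N) *\<^sub>R u"
  proof (induction N)
    case 0 thus ?case using K0 by auto
  next
    case (Suc N)
    then obtain u where u: "u \<in> K" "(\<Sum>n<N. ((1/2)^(Suc n)) *\<^sub>R k n) = (1 - (1/2)^N) *\<^sub>R u" by blast
    define a :: real where "a = 1 - (1/2)^N"
    define b :: real where "b = (1/2)^(Suc N)"
    have a0: "0 \<le> a" unfolding a_def by (simp add: power_le_one)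
    have b0: "0 < b" unfolding b_def by simp
    have ab: "a + b = 1 - (1/2)^(Suc N)" unfolding a_def b_def by simp
    have "(a/(a+b)) *\<^sub>R u + (b/(a+b)) *\<^sub>R k N \<in> K"
      using mem_convex_alt[OF cK u(1) kK a0 less_imp_le[OF b0]] a0 b0 by simp
    moreover have "(1 - (1/2)^(Suc N)) *\<^sub>R ((a/(a+b)) *\<^sub>R u + (b/(a+b)) *\<^sub>R k N)
        = (\<Sum>n<Suc N. ((1/2)^(Suc n)) *\<^sub>R k n)"
    proof -
      have "(a+b) *\<^sub>R ((a/(a+b)) *\<^sub>R u + (b/(a+b)) *\<^sub>R k N) = a *\<^sub>R u + b *\<^sub>R k N"
        using a0 b0 by (simp add: scaleR_add_right)
      moreover have "(\<Sum>n<Suc N. ((1/2)^(Suc n)) *\<^sub>R k n) = a *\<^sub>R u + b *\<^sub>R k N"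
        unfolding sum.lessThan_Suc u(2) a_def b_def ..
      ultimately show ?thesis unfolding ab by simp
    qed
    ultimately show ?case by metis
  qed
  then obtain u where u: "u \<in> K" "(\<Sum>n<N. ((1/2)^(Suc n)) *\<^sub>R k n) = (1 - (1/2)^N) *\<^sub>R u" by blast
  have "(1 - (1/2)^N) *\<^sub>R u + ((1/2)^N) *\<^sub>R 0 \<in> K"
    by (rule convexD[OF cK u(1) K0]) (auto simp: power_le_one)
  thus ?thesis using u(2) by simp
qed

lemma closing_lemma:
  fixes K :: "'v::banach set" and T :: "'v \<Rightarrow> 'w::real_normed_vector"
  assumes cl: "closed K" and bd: "bounded K" and cK: "convex K" and K0: "0 \<in> K"
    and T: "bounded_linear T" and rho: "0 < \<rho>" and sub: "ball 0 \<rho> \<subseteq> closure (T ` K)"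
  shows "ball 0 (\<rho>/2) \<subseteq> T ` K"
proof
  fix y :: 'w assume y: "y \<in> ball 0 (\<rho>/2)"
  obtain R where R: "\<And>k. k \<in> K \<Longrightarrow> norm k \<le> R" using bd by (auto simp: bounded_iff)
  have "\<forall>z. \<exists>k. norm z < \<rho> \<longrightarrow> k \<in> K \<and> norm (z - T k) < \<rho>/2"
  proof
    fix z show "\<exists>k. norm z < \<rho> \<longrightarrow> k \<in> K \<and> norm (z - T k) < \<rho>/2"
    proof (cases "norm z < \<rho>")
      case True
      hence "z \<in> closure (T ` K)" using sub by auto
      then obtain w where "w \<in> T ` K" "dist w z < \<rho>/2" using rho
        by (metis closure_approachable half_gt_zero)
      thus ?thesis by (auto simp: dist_norm norm_minus_commute)
    qed auto
  qed
  then obtain \<sigma> where \<sigma>: "\<And>z. norm z < \<rho> \<Longrightarrow> \<sigma> z \<in> K \<and> norm (z - T (\<sigma> z)) < \<rho>/2" by metis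
  define r where "r = rec_nat (2 *\<^sub>R y) (\<lambda>n z. 2 *\<^sub>R (z - T (\<sigma> z)))"
  have r0: "r 0 = 2 *\<^sub>R y" and rS: "\<And>n. r (Suc n) = 2 *\<^sub>R (r n - T (\<sigma> (r n)))"
    by (simp_all add: r_def)
  define k where "k n = \<sigma> (r n)" for n
  have rb: "norm (r n) < \<rho>" for n
  proof (induction n)
    case 0 thus ?case using y by (simp add: r0)
  next
    case (Suc n) thus ?case using \<sigma>[OF Suc] by (simp add: rS)
  qed
  have kK: "k n \<in> K" for n using \<sigma>[OF rb] by (simp add: k_def)
  have rep: "2 *\<^sub>R y = (\<Sum>n<N. ((1/2)^n) *\<^sub>R T (k n)) + ((1/2)^N) *\<^sub>R r N" for N
  proof (induction N)
    case 0 thus ?case by (simp add: r0)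
  next
    case (Suc N)
    have "r N = T (k N) + (1/2) *\<^sub>R r (Suc N)" by (simp add: rS k_def)
    hence "((1/2)^N) *\<^sub>R r N = ((1/2)^N) *\<^sub>R T (k N) + ((1/2)^(Suc N)) *\<^sub>R r (Suc N)"
      by (simp add: scaleR_add_right)
    thus ?case using Suc by simp
  qed
  have R0: "0 \<le> R" using R[OF K0] by simp
  have summ: "summable (\<lambda>n. ((1/2)^(Suc n)) *\<^sub>R k n)"
  proof (rule summable_comparison_test)
    show "\<exists>N. \<forall>n\<ge>N. norm (((1/2)^(Suc n)) *\<^sub>R k n) \<le> R * (1/2)^(Suc n)"
      using R[OF kK] by (auto simp: mult.commute intro!: mult_left_mono)
    show "summable (\<lambda>n. R * (1/2::real)^(Suc n))"
      by (intro summable_mult summable_ignore_initial_segment[where k=1, simplified] summable_geometric) simp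
  qed
  define S where "S = (\<Sum>n. ((1/2)^(Suc n)) *\<^sub>R k n)"
  have S_lim: "(\<lambda>N. \<Sum>n<N. ((1/2)^(Suc n)) *\<^sub>R k n) \<longlonglongrightarrow> S"
    using summable_LIMSEQ[OF summ] by (simp add: S_def)
  have SK: "S \<in> K"
    by (rule closed_sequentially[OF cl _ S_lim]) (rule convex_partial_geom[OF cK K0 kK])
  have L1: "(\<lambda>N. T (\<Sum>n<N. ((1/2)^(Suc n)) *\<^sub>R k n)) \<longlonglongrightarrow> T S"
    by (rule bounded_linear.tendsto[OF T S_lim])
  have EQ: "T (\<Sum>n<N. ((1/2)^(Suc n)) *\<^sub>R k n) = y - ((1/2)^(Suc N)) *\<^sub>R r N" for N
  proof -
    have "T (\<Sum>n<N. ((1/2)^(Suc n)) *\<^sub>R k n) = (1/2) *\<^sub>R (\<Sum>n<N. ((1/2)^n) *\<^sub>R T (k n))"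
      by (simp add: linear_sum[OF bounded_linear.linear[OF T]] linear_scale[OF bounded_linear.linear[OF T]] scaleR_sum_right)
    also have "\<dots> = (1/2) *\<^sub>R (2 *\<^sub>R y - ((1/2)^N) *\<^sub>R r N)" using rep[of N] by (simp add: algebra_simps)
    also have "\<dots> = y - ((1/2)^(Suc N)) *\<^sub>R r N" by (simp add: algebra_simps)
    finally show ?thesis .
  qed
  have L2: "(\<lambda>N. y - ((1/2)^(Suc N)) *\<^sub>R r N) \<longlonglongrightarrow> y"
  proof -
    have "(\<lambda>N. ((1/2::real)^(Suc N)) *\<^sub>R r N) \<longlonglongrightarrow> 0"
    proof (rule tendsto_norm_zero_cancel, rule Lim_null_comparison)
      show "\<forall>\<^sub>F N in sequentially. norm (norm (((1/2::real)^(Suc N)) *\<^sub>R r N)) \<le> \<rho> * (1/2)^(Suc N)"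
        using rb by (auto intro!: always_eventually simp: mult.commute less_imp_le intro!: mult_left_mono)
      show "(\<lambda>N. \<rho> * (1/2::real)^(Suc N)) \<longlonglongrightarrow> 0"
        by (intro tendsto_mult_right_zero LIMSEQ_power_zero[THEN LIMSEQ_Suc]) simp
    qed
    thus ?thesis using tendsto_diff[OF tendsto_const[of y]] by fastforce
  qed
  have "(\<lambda>N. y - ((1/2)^(Suc N)) *\<^sub>R r N) \<longlonglongrightarrow> T S" using L1 unfolding EQ .
  hence "T S = y" using L2 LIMSEQ_unique by blast
  thus "y \<in> T ` K" using SK by blast
qed

lemma baire_banach:
  fixes C :: "nat \<Rightarrow> 'a::banach set"
  assumes "\<And>n. closed (C n)" "(\<Union>n. C n) = UNIV"
  shows "\<exists>n. interior (C n) \<noteq> {}"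
proof (rule ccontr)
  assume "\<not> ?thesis"
  hence e: "\<And>n. interior (C n) = {}" by auto
  have "Met_TC.mtopology interior_of \<Union>(range C) = {}"
    apply (rule Met_TC.metric_Baire_category_alt)
    using assms e by (auto simp: complete_UNIV interior_of_def interior_def)
  thus False using assms(2) by (simp add: interior_of_def) (metis open_UNIV UNIV_I)
qed

definition cvxR :: "'a::real_vector set \<Rightarrow> ('a \<Rightarrow> real) \<Rightarrow> bool" where
  "cvxR D F \<longleftrightarrow> (\<forall>x\<in>D. \<forall>y\<in>D. \<forall>t::real. 0 \<le> t \<and> t \<le> 1 \<longrightarrow>
      t *\<^sub>R x + (1 - t) *\<^sub>R y \<in> D \<and> F (t *\<^sub>R x + (1 - t) *\<^sub>R y) \<le> t * F x + (1 - t) * F y)"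

lemma cvxR_D: "cvxR D F \<Longrightarrow> x \<in> D \<Longrightarrow> y \<in> D \<Longrightarrow> 0 \<le> t \<Longrightarrow> t \<le> 1 \<Longrightarrow>
   t *\<^sub>R x + (1 - t) *\<^sub>R y \<in> D \<and> F (t *\<^sub>R x + (1 - t) *\<^sub>R y) \<le> t * F x + (1 - t) * F y"
  unfolding cvxR_def by blast

lemma cvxR_sublevel_convex:
  assumes "cvxR D F" shows "convex {x\<in>D. F x \<le> r}"
proof (rule convexI)
  fix x y and u v :: real assume h: "x \<in> {x\<in>D. F x \<le> r}" "y \<in> {x\<in>D. F x \<le> r}" "0 \<le> u" "0 \<le> v" "u + v = 1"
  hence v: "v = 1 - u" "u \<le> 1" by auto
  have "u *\<^sub>R x + (1 - u) *\<^sub>R y \<in> D \<and> F (u *\<^sub>R x + (1 - u) *\<^sub>R y) \<le> u * F x + (1 - u) * F y"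
    using cvxR_D[OF assms _ _ h(3) v(2)] h by auto
  moreover have "u * F x + (1 - u) * F y \<le> u * r + (1 - u) * r"
    using h v by (intro add_mono mult_left_mono) auto
  moreover have "u * r + (1 - u) * r = r" by (simp add: algebra_simps)
  ultimately show "u *\<^sub>R x + v *\<^sub>R y \<in> {x\<in>D. F x \<le> r}" using v by auto
qed

lemma ball_rep:
  fixes F G :: "'a::banach \<Rightarrow> real"
  assumes cF: "cvxR DF F" and cG: "cvxR DG G"
    and clF: "\<And>r. closed {x\<in>DF. F x \<le> r}" and clG: "\<And>r. closed {x\<in>DG. G x \<le> r}"
    and sur: "\<And>c. \<exists>x\<in>DF. \<exists>y\<in>DG. c = x - y"
  shows "\<exists>c0 r M. 0 < r \<and> (\<forall>u. norm (u - c0) < r \<longrightarrow> (\<exists>x\<in>DF. \<exists>y\<in>DG. u = x - y \<and> F x + G y \<le> M))"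
proof -
  define T :: "'a \<times> 'a \<Rightarrow> 'a" where "T = (\<lambda>k. fst k - snd k)"
  have T: "bounded_linear T" unfolding T_def by (intro bounded_linear_sub bounded_linear_fst bounded_linear_snd)
  define K where "K n = ({x\<in>DF. F x \<le> real n} \<inter> cball 0 (real n)) \<times> ({y\<in>DG. G y \<le> real n} \<inter> cball 0 (real n))" for n
  have Kcl: "closed (K n)" for n unfolding K_def by (intro closed_Times closed_Int clF clG closed_cball)
  have Kbd: "bounded (K n)" for n unfolding K_def by (intro bounded_Times bounded_Int) auto
  have Kcv: "convex (K n)" for n unfolding K_def
    by (intro convex_Times convex_Int cvxR_sublevel_convex[OF cF] cvxR_sublevel_convex[OF cG] convex_cball)
  have cover: "(\<Union>n. closure (T ` K n)) = UNIV"
  proof (rule set_eqI, rule iffI)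
    fix c :: 'a
    obtain x y where xy: "x \<in> DF" "y \<in> DG" "c = x - y" using sur by blast
    obtain n :: nat where n: "max (max (norm x) (norm y)) (max (F x) (G y)) \<le> real n" using real_arch_simple by blast
    have "(x, y) \<in> K n" using xy n by (auto simp: K_def)
    hence "c \<in> T ` K n" using xy by (auto simp: T_def image_iff intro!: bexI[of _ "(x,y)"])
    hence "c \<in> closure (T ` K n)" by (rule subsetD[OF closure_subset])
    thus "c \<in> (\<Union>n. closure (T ` K n))" by (rule UN_I[OF UNIV_I])
  qed auto
  have "\<exists>n. interior (closure (T ` K n)) \<noteq> {}"
    by (rule baire_banach[OF closed_closure cover])
  then obtain n w where w: "w \<in> interior (closure (T ` K n))" by blast
  then obtain \<delta> where d0: "0 < \<delta>" "ball w \<delta> \<subseteq> interior (closure (T ` K n))"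
    using open_contains_ball open_interior by blast
  have d: "0 < \<delta>" "ball w \<delta> \<subseteq> closure (T ` K n)"
    using d0 interior_subset by blast+
  have "w \<in> closure (T ` K n)" using d by auto
  hence ap: "\<forall>e>0. \<exists>z\<in>T ` K n. dist z w < e" by (simp only: closure_approachable)
  have h2: "\<delta>/2 > 0" using d by simp
  have "\<exists>z\<in>T ` K n. dist z w < \<delta>/2" using ap h2 by blast
  then obtain k0 where k0: "k0 \<in> K n" "dist (T k0) w < \<delta>/2" by blast
  define K' where "K' = (+) (- k0) ` K n"
  have K'0: "0 \<in> K'" unfolding K'_def using k0(1) by (intro image_eqI[where x=k0]) simp_all
  have lin: "\<And>k. T (- k0 + k) = - T k0 + T k"
    using linear_add[OF bounded_linear.linear[OF T]] linear_neg[OF bounded_linear.linear[OF T]] by metis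
  have TK': "T ` K' = (+) (- T k0) ` (T ` K n)"
    unfolding K'_def image_image lin ..
  have "ball 0 (\<delta>/2) \<subseteq> closure (T ` K')"
  proof
    fix u :: 'a assume u: "u \<in> ball 0 (\<delta>/2)"
    have "dist w (u + T k0) < \<delta>" using u k0(2)
      by (simp add: dist_norm) (smt (verit, ccfv_SIG) norm_minus_commute norm_triangle_ineq4 diff_diff_eq2 add_diff_cancel_left')
    hence "u + T k0 \<in> closure (T ` K n)" using d by auto
    hence "- T k0 + (u + T k0) \<in> (+) (- T k0) ` closure (T ` K n)" by blast
    thus "u \<in> closure (T ` K')" unfolding TK' closure_translation by simp
  qed
  note bsub = this
  have sub: "ball 0 ((\<delta>/2)/2) \<subseteq> T ` K'"
  proof (rule closing_lemma[OF _ _ _ K'0 T _ bsub])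
    show "closed K'" unfolding K'_def by (rule closed_translation[OF Kcl])
    show "bounded K'" unfolding K'_def by (rule bounded_translation[OF Kbd])
    show "convex K'" unfolding K'_def by (rule convex_translation[OF Kcv])
  qed (use d in auto)
  show ?thesis
  proof (intro exI conjI allI impI)
    show "0 < \<delta>/4" using d by simp
    fix u :: 'a assume "norm (u - T k0) < \<delta>/4"
    hence "u - T k0 \<in> T ` K'" using sub by auto
    then obtain k where k: "k \<in> K n" "u - T k0 = T (- k0 + k)" by (auto simp: K'_def)
    have "T (- k0 + k) = T k - T k0" using lin[of k] by simp
    hence "u = fst k - snd k" using k by (simp add: T_def)
    moreover have "fst k \<in> DF" "snd k \<in> DG" "F (fst k) + G (snd k) \<le> 2 * real n" using k(1) by (auto simp: K_def)
    ultimately show "\<exists>x\<in>DF. \<exists>y\<in>DG. u = x - y \<and> F x + G y \<le> 2 * real n" by blast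
  qed
qed

lemma ball0_rep:
  fixes F G :: "'a::banach \<Rightarrow> real"
  assumes cF: "cvxR DF F" and cG: "cvxR DG G"
    and clF: "\<And>r. closed {x\<in>DF. F x \<le> r}" and clG: "\<And>r. closed {x\<in>DG. G x \<le> r}"
    and sur: "\<And>c. \<exists>x\<in>DF. \<exists>y\<in>DG. c = x - y"
  shows "\<exists>r M. 0 < r \<and> 0 \<le> M \<and> (\<forall>u. norm u < r \<longrightarrow> (\<exists>x\<in>DF. \<exists>y\<in>DG. u = x - y \<and> F x + G y \<le> M))"
proof -
  obtain c0 r M where r: "0 < r" and rep: "\<And>u. norm (u - c0) < r \<Longrightarrow> \<exists>x\<in>DF. \<exists>y\<in>DG. u = x - y \<and> F x + G y \<le> M"
    using ball_rep[OF cF cG clF clG sur] by blast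
  obtain x1 y1 where xy1: "x1 \<in> DF" "y1 \<in> DG" "- c0 = x1 - y1" using sur by blast
  define M' where "M' = max 0 ((M + F x1 + G y1)/2)"
  show ?thesis
  proof (intro exI conjI allI impI)
    show "0 < r/2" using r by simp
    show "0 \<le> M'" by (simp add: M'_def)
    fix u :: 'a assume u: "norm u < r/2"
    have "norm ((2 *\<^sub>R u + c0) - c0) < r" using u by simp
    then obtain x y where xy: "x \<in> DF" "y \<in> DG" "2 *\<^sub>R u + c0 = x - y" "F x + G y \<le> M"
      using rep by blast
    have h: "0 \<le> (1/2::real)" "(1/2::real) \<le> 1" by simp_all
    note fx = cvxR_D[OF cF xy(1) xy1(1) h] and gy = cvxR_D[OF cG xy(2) xy1(2) h]
    let ?x = "(1/2::real) *\<^sub>R x + (1 - 1/2) *\<^sub>R x1" and ?y = "(1/2::real) *\<^sub>R y + (1 - 1/2) *\<^sub>R y1"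
    have "?x - ?y = (1/2::real) *\<^sub>R (x - y) + (1/2::real) *\<^sub>R (x1 - y1)" by (simp add: algebra_simps)
    also have "\<dots> = u" unfolding xy(3)[symmetric] xy1(3)[symmetric] by (simp add: algebra_simps)
    finally have "u = ?x - ?y" ..
    moreover have "F ?x + G ?y \<le> (M + F x1 + G y1)/2" using conjunct2[OF fx] conjunct2[OF gy] xy(4) by simp
    hence "F ?x + G ?y \<le> M'" unfolding M'_def by (rule order_trans[OF _ max.cobounded2])
    ultimately show "\<exists>x\<in>DF. \<exists>y\<in>DG. u = x - y \<and> F x + G y \<le> M'" using fx gy by blast
  qed
qed

lemma key_lemma:
  fixes F G :: "'a::banach \<Rightarrow> real"
  assumes cF: "cvxR DF F" and cG: "cvxR DG G"
    and clF: "\<And>r. closed {x\<in>DF. F x \<le> r}" and clG: "\<And>r. closed {x\<in>DG. G x \<le> r}"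
    and sur: "\<And>c. \<exists>x\<in>DF. \<exists>y\<in>DG. c = x - y"
    and diag: "\<And>x. x \<in> DF \<Longrightarrow> x \<in> DG \<Longrightarrow> 0 \<le> F x + G x"
  shows "\<exists>l. bounded_linear l \<and> (\<forall>x\<in>DF. \<forall>y\<in>DG. l (x - y) \<le> F x + G y)"
proof -
  obtain r M where r: "0 < r" "0 \<le> M"
    and rep: "\<And>u. norm u < r \<Longrightarrow> \<exists>x\<in>DF. \<exists>y\<in>DG. u = x - y \<and> F x + G y \<le> M"
    using ball0_rep[OF cF cG clF clG sur] by blast
  define S where "S c = {(F x + G y) / t | x y t. x \<in> DF \<and> y \<in> DG \<and> 0 < t \<and> x - y = t *\<^sub>R c}" for c
  define p where "p c = Inf (S c)" for c
  have Smem: "v \<in> S c" if "x \<in> DF" "y \<in> DG" "0 < t" "x - y = t *\<^sub>R c" "v = (F x + G y) / t" for v x y t c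
    unfolding S_def mem_Collect_eq by (rule exI[of _ x], rule exI[of _ y], rule exI[of _ t]) (use that in auto)
  have elem: "\<exists>a\<in>S c. a \<le> M / t" if t: "0 < t" "norm (t *\<^sub>R c) < r" for c t
  proof -
    obtain x y where xy: "x \<in> DF" "y \<in> DG" "t *\<^sub>R c = x - y" "F x + G y \<le> M" using rep[OF t(2)] by blast
    have "(F x + G y) / t \<in> S c" by (rule Smem[OF xy(1) xy(2) t(1) xy(3)[symmetric] refl])
    moreover have "(F x + G y) / t \<le> M / t" using xy(4) t(1) by (simp add: divide_right_mono)
    ultimately show ?thesis by blast
  qed
  define s where "s c = r / (2 * (norm c + 1))" for c :: 'a
  have s_pos: "0 < s c" for c unfolding s_def using r norm_ge_zero[of c] by (intro divide_pos_pos) (smt (verit))+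
  have s_norm: "norm (s c *\<^sub>R c) < r" for c
  proof -
    have n0: "0 \<le> norm c" by simp
    have q: "norm c / (2 * (norm c + 1)) < 1" using n0 by (subst divide_less_eq_1_pos) (smt (verit))+
    have "norm (s c *\<^sub>R c) = s c * norm c" using s_pos[of c] by simp
    also have "\<dots> = r * (norm c / (2 * (norm c + 1)))" by (simp add: s_def)
    also have "\<dots> < r * 1" using q r(1) by (rule mult_strict_left_mono)
    finally show ?thesis by simp
  qed
  have ne: "S c \<noteq> {}" for c using elem[OF s_pos s_norm] by blast
  have lb: "- M / s c \<le> a" if a: "a \<in> S c" for a c
  proof -
    obtain x y t where xyt: "a = (F x + G y) / t" "x \<in> DF" "y \<in> DG" "0 < t" "x - y = t *\<^sub>R c"
      using a unfolding S_def by blast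
    define \<sigma> where "\<sigma> = s c"
    have sg: "0 < \<sigma>" using s_pos by (simp add: \<sigma>_def)
    have "norm (- (\<sigma> *\<^sub>R c)) < r" using s_norm by (simp add: \<sigma>_def)
    then obtain x' y' where xy': "x' \<in> DF" "y' \<in> DG" "- (\<sigma> *\<^sub>R c) = x' - y'" "F x' + G y' \<le> M"
      using rep by blast
    define lam where "lam = \<sigma> / (\<sigma> + t)"
    have l01: "0 \<le> lam" "lam \<le> 1" using sg xyt(4) by (auto simp: lam_def)
    note fz = cvxR_D[OF cF xyt(2) xy'(1) l01] and gz = cvxR_D[OF cG xyt(3) xy'(2) l01]
    define z1 where "z1 = lam *\<^sub>R x + (1 - lam) *\<^sub>R x'"
    define z2 where "z2 = lam *\<^sub>R y + (1 - lam) *\<^sub>R y'"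
    have "z1 - z2 = lam *\<^sub>R (x - y) + (1 - lam) *\<^sub>R (x' - y')"
      by (simp add: z1_def z2_def algebra_simps)
    also have "\<dots> = (lam * t - (1 - lam) * \<sigma>) *\<^sub>R c"
      unfolding xyt(5) xy'(3)[symmetric] by (simp add: algebra_simps)
    also have "lam * t - (1 - lam) * \<sigma> = 0" using sg xyt(4) by (simp add: lam_def field_simps)
    finally have "z1 = z2" by simp
    have z1D: "z1 \<in> DF" using conjunct1[OF fz] unfolding z1_def .
    have z2D: "z2 \<in> DG" using conjunct1[OF gz] unfolding z2_def .
    have f1: "F z1 \<le> lam * F x + (1 - lam) * F x'" using conjunct2[OF fz] unfolding z1_def .
    have g1: "G z2 \<le> lam * G y + (1 - lam) * G y'" using conjunct2[OF gz] unfolding z2_def .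
    have "0 \<le> F z1 + G z1" using diag[OF z1D] z2D \<open>z1 = z2\<close> by simp
    also have "\<dots> = F z1 + G z2" using \<open>z1 = z2\<close> by simp
    also have "\<dots> \<le> (lam * F x + (1 - lam) * F x') + (lam * G y + (1 - lam) * G y')"
      using f1 g1 by (rule add_mono)
    also have "\<dots> = lam * (F x + G y) + (1 - lam) * (F x' + G y')" by (simp add: algebra_simps)
    also have "\<dots> \<le> lam * (F x + G y) + (1 - lam) * M"
      using xy'(4) l01 by (simp add: mult_left_mono)
    finally have h0: "0 \<le> lam * (F x + G y) + (1 - lam) * M" .
    have st: "0 < \<sigma> + t" using sg xyt(4) by simp
    have "1 - lam = t / (\<sigma> + t)" using st by (simp add: lam_def field_simps)
    hence "lam * (F x + G y) + (1 - lam) * M = (\<sigma> * (F x + G y) + t * M) / (\<sigma> + t)"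
      by (simp add: lam_def add_divide_distrib)
    hence "0 \<le> (\<sigma> * (F x + G y) + t * M) / (\<sigma> + t)" using h0 by simp
    hence h: "0 \<le> \<sigma> * (F x + G y) + t * M" using st unfolding zero_le_divide_iff by auto
    have "(- (t * M)) / (\<sigma> * t) \<le> (\<sigma> * (F x + G y)) / (\<sigma> * t)"
      using h sg xyt(4) by (intro divide_right_mono) auto
    hence "- M / \<sigma> \<le> (F x + G y) / t" using sg xyt(4) by simp
    thus ?thesis using xyt(1) by (simp add: \<sigma>_def)
  qed
  have bdd: "bdd_below (S c)" for c using lb unfolding bdd_below_def by blast
  have pS: "p c \<le> a" if "a \<in> S c" for a c unfolding p_def by (rule cInf_lower[OF that bdd])
  have p_up: "p (x - y) \<le> F x + G y" if "x \<in> DF" "y \<in> DG" for x y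
  proof -
    have "(F x + G y) / 1 \<in> S (x - y)" by (rule Smem[OF that(1) that(2) zero_less_one _ refl]) simp
    thus ?thesis using pS by (metis div_by_1)
  qed
  have "sublin p" unfolding sublin_def
  proof (intro conjI allI impI)
    fix c1 c2
    show "p (c1 + c2) \<le> p c1 + p c2" unfolding p_def[of c1] p_def[of c2]
    proof (rule cInf_add_le[OF ne ne])
      fix v1 v2 assume "v1 \<in> S c1" "v2 \<in> S c2"
      then obtain x1 y1 t1 x2 y2 t2 where
        a1: "v1 = (F x1 + G y1) / t1" "x1 \<in> DF" "y1 \<in> DG" "0 < t1" "x1 - y1 = t1 *\<^sub>R c1" and
        a2: "v2 = (F x2 + G y2) / t2" "x2 \<in> DF" "y2 \<in> DG" "0 < t2" "x2 - y2 = t2 *\<^sub>R c2"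
        unfolding S_def by blast
      define lam where "lam = t2 / (t1 + t2)"
      define t where "t = t1 * t2 / (t1 + t2)"
      have l01: "0 \<le> lam" "lam \<le> 1" using a1(4) a2(4) by (auto simp: lam_def)
      have tpos: "0 < t" using a1(4) a2(4) by (simp add: t_def)
      note fz = cvxR_D[OF cF a1(2) a2(2) l01] and gz = cvxR_D[OF cG a1(3) a2(3) l01]
      define x where "x = lam *\<^sub>R x1 + (1 - lam) *\<^sub>R x2"
      define y where "y = lam *\<^sub>R y1 + (1 - lam) *\<^sub>R y2"
      have e1: "lam * t1 = t" and e2: "(1 - lam) * t2 = t"
        using a1(4) a2(4) by (simp_all add: lam_def t_def field_simps)
      have "x - y = lam *\<^sub>R (x1 - y1) + (1 - lam) *\<^sub>R (x2 - y2)"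
        by (simp add: x_def y_def algebra_simps)
      also have "\<dots> = (lam * t1) *\<^sub>R c1 + ((1 - lam) * t2) *\<^sub>R c2"
        unfolding a1(5) a2(5) by simp
      also have "\<dots> = t *\<^sub>R (c1 + c2)" unfolding e1 e2 by (simp add: scaleR_add_right)
      finally have xy: "x - y = t *\<^sub>R (c1 + c2)" .
      have "(F x + G y) / t \<in> S (c1 + c2)"
        by (rule Smem[OF _ _ tpos xy refl]) (use fz gz in \<open>simp_all add: x_def y_def\<close>)
      hence "p (c1 + c2) \<le> (F x + G y) / t" by (rule pS)
      also have "\<dots> \<le> (lam * (F x1 + G y1) + (1 - lam) * (F x2 + G y2)) / t"
      proof (rule divide_right_mono)
        have f1: "F x \<le> lam * F x1 + (1 - lam) * F x2" using conjunct2[OF fz] unfolding x_def .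
        have g1: "G y \<le> lam * G y1 + (1 - lam) * G y2" using conjunct2[OF gz] unfolding y_def .
        have "F x + G y \<le> (lam * F x1 + (1 - lam) * F x2) + (lam * G y1 + (1 - lam) * G y2)"
          using f1 g1 by (rule add_mono)
        also have "\<dots> = lam * (F x1 + G y1) + (1 - lam) * (F x2 + G y2)" by (simp add: algebra_simps)
        finally show "F x + G y \<le> lam * (F x1 + G y1) + (1 - lam) * (F x2 + G y2)" .
      qed (use tpos in simp)
      also have "\<dots> = (lam / t) * (F x1 + G y1) + ((1 - lam) / t) * (F x2 + G y2)"
        by (simp add: add_divide_distrib)
      also have "lam / t = 1 / t1"
      proof -
        have "lam \<noteq> 0" using e1 tpos by auto
        thus ?thesis unfolding e1[symmetric] by simp
      qed
      also have "(1 - lam) / t = 1 / t2"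
      proof -
        have "1 - lam \<noteq> 0" using e2 tpos by auto
        thus ?thesis unfolding e2[symmetric] by simp
      qed
      also have "1 / t1 * (F x1 + G y1) + 1 / t2 * (F x2 + G y2) = v1 + v2"
        unfolding a1(1) a2(1) by simp
      finally show "p (c1 + c2) \<le> v1 + v2" .
    qed
  next
    fix a :: real and c assume a: "0 < a"
    have "S (a *\<^sub>R c) = (\<lambda>v. a * v) ` S c"
    proof (intro set_eqI iffI)
      fix v assume "v \<in> S (a *\<^sub>R c)"
      then obtain x y t where h: "v = (F x + G y) / t" "x \<in> DF" "y \<in> DG" "0 < t" "x - y = t *\<^sub>R (a *\<^sub>R c)"
        unfolding S_def by blast
      have "(F x + G y) / (t * a) \<in> S c" using h a by (intro Smem[OF h(2) h(3) _ _ refl]) simp_all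
      moreover have "v = a * ((F x + G y) / (t * a))" using h a by simp
      ultimately show "v \<in> (\<lambda>v. a * v) ` S c" by blast
    next
      fix v assume "v \<in> (\<lambda>v. a * v) ` S c"
      then obtain x y t where h: "v = a * ((F x + G y) / t)" "x \<in> DF" "y \<in> DG" "0 < t" "x - y = t *\<^sub>R c"
        unfolding S_def by blast
      have xe: "x - y = (t / a) *\<^sub>R (a *\<^sub>R c)" using h a by simp
      have ve: "v = (F x + G y) / (t / a)" using h a by simp
      show "v \<in> S (a *\<^sub>R c)" by (rule Smem[OF h(2) h(3) _ xe ve]) (use h a in simp)
    qed
    thus "p (a *\<^sub>R c) = a * p c" unfolding p_def using cInf_scale[OF ne bdd a] by simp
  qed
  then obtain l where l: "linear l" "\<And>x. l x \<le> p x" using hahn_banach_sublin by blast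
  define K where "K = 2 * M / r"
  have bnd: "l c \<le> K * norm c" for c
  proof (cases "c = 0")
    case True thus ?thesis using linear_0[OF l(1)] by simp
  next
    case False
    define t where "t = r / (2 * norm c)"
    have t: "0 < t" "norm (t *\<^sub>R c) < r" using False r by (simp_all add: t_def)
    obtain a where "a \<in> S c" "a \<le> M / t" using elem[OF t] by blast
    hence "l c \<le> M / t" using l(2)[of c] pS[of a c] by linarith
    also have "M / t = K * norm c" using False r by (simp add: t_def K_def field_simps)
    finally show ?thesis .
  qed
  have "bounded_linear l"
  proof (rule bounded_linear_intro[where K=K])
    show "l (x + y) = l x + l y" for x y by (rule linear_add[OF l(1)])
    show "l (a *\<^sub>R x) = a *\<^sub>R l x" for a x by (rule linear_scale[OF l(1)])
    show "norm (l x) \<le> norm x * K" for x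
      using bnd[of x] bnd[of "- x"] linear_neg[OF l(1), of x] by (simp add: abs_le_iff mult.commute)
  qed
  moreover have "\<forall>x\<in>DF. \<forall>y\<in>DG. l (x - y) \<le> F x + G y"
  proof (intro ballI)
    fix x y assume "x \<in> DF" "y \<in> DG"
    thus "l (x - y) \<le> F x + G y" using l(2)[of "x - y"] p_up[of x y] by linarith
  qed
  ultimately show ?thesis by blast
qed

lemma lsc_closed_le:
  fixes f :: "'a::topological_space \<Rightarrow> ereal" and h :: "'a \<Rightarrow> real"
  assumes lsc: "lsc_fn f" and h: "continuous_on UNIV h"
  shows "closed {x. f x \<le> ereal (h x)}"
proof -
  have "open (- {x. f x \<le> ereal (h x)})"
  proof (subst open_subopen, intro ballI)
    fix x0 assume "x0 \<in> - {x. f x \<le> ereal (h x)}"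
    hence "ereal (h x0) < f x0" by auto
    then obtain z where z: "ereal (h x0) < ereal z" "ereal z < f x0" using ereal_dense2 by blast
    define T where "T = - {x. f x \<le> ereal z} \<inter> {x. h x < z}"
    have "open T" unfolding T_def
      using lsc h by (intro open_Int open_Collect_less) (auto simp: lsc_fn_def continuous_on_const)
    moreover have "x0 \<in> T" using z by (auto simp: T_def)
    moreover have "T \<subseteq> - {x. f x \<le> ereal (h x)}"
    proof
      fix x assume "x \<in> T"
      hence "ereal z < f x" "h x < z" by (auto simp: T_def)
      hence "ereal (h x) < ereal z" "ereal z < f x" by simp_all
      hence "ereal (h x) < f x" by (rule less_trans)
      thus "x \<in> - {x. f x \<le> ereal (h x)}" by auto
    qed
    ultimately show "\<exists>T. open T \<and> x0 \<in> T \<and> T \<subseteq> - {x. f x \<le> ereal (h x)}" by blast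
  qed
  thus ?thesis by (simp add: closed_def)
qed

lemma lsc_shift:
  fixes f :: "'a::real_normed_vector \<Rightarrow> ereal"
  assumes "lsc_fn f" shows "lsc_fn (\<lambda>x. f (x + c))"
  unfolding lsc_fn_def
proof
  fix r
  have "{x. f (x + c) \<le> ereal r} = (\<lambda>x. x + c) -` {x. f x \<le> ereal r}" by auto
  moreover have "closed ((\<lambda>x. x + c) -` {x. f x \<le> ereal r})"
    using assms by (intro continuous_closed_vimage) (auto simp: lsc_fn_def intro!: continuous_intros)
  ultimately show "closed {x. f (x + c) \<le> ereal r}" by simp
qed

lemma cvx_dom:
  assumes p: "proper_fn f" and cv: "convex_fn f" and a: "a \<in> dom_fn f" and b: "b \<in> dom_fn f"
    and t: "0 \<le> t" "t \<le> 1"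
  shows "t *\<^sub>R a + (1 - t) *\<^sub>R b \<in> dom_fn f \<and>
    real_of_ereal (f (t *\<^sub>R a + (1 - t) *\<^sub>R b)) \<le> t * real_of_ereal (f a) + (1 - t) * real_of_ereal (f b)"
proof -
  obtain A B where AB: "f a = ereal A" "f b = ereal B" using a b by (auto simp: dom_fn_def)
  consider "t = 0" | "t = 1" | "0 < t \<and> t < 1" using t by linarith
  thus ?thesis
  proof cases
    case 1 thus ?thesis using b AB by simp
  next
    case 2 thus ?thesis using a AB by simp
  next
    case 3
    hence le: "f (t *\<^sub>R a + (1 - t) *\<^sub>R b) \<le> ereal (t * A + (1 - t) * B)"
      using cv AB unfolding convex_fn_def by (metis times_ereal.simps(1) plus_ereal.simps(1))
    have "f (t *\<^sub>R a + (1 - t) *\<^sub>R b) \<noteq> - \<infinity>" using p by (simp add: proper_fn_def)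
    then obtain v where v: "f (t *\<^sub>R a + (1 - t) *\<^sub>R b) = ereal v" using le
      by (cases "f (t *\<^sub>R a + (1 - t) *\<^sub>R b)") auto
    show ?thesis using le v AB by (auto simp: dom_fn_def)
  qed
qed

lemma dom_real:
  assumes "proper_fn f" "x \<in> dom_fn f" shows "f x = ereal (real_of_ereal (f x))"
  using assms by (auto simp: dom_fn_def)

lemma not_dom_inf:
  assumes "proper_fn f" "x \<notin> dom_fn f" shows "f x = \<infinity>"
  using assms by (cases "f x") (auto simp: dom_fn_def proper_fn_def)

theorem theorem4p6:
  fixes bf :: "'a::banach \<Rightarrow> 'a \<Rightarrow> real"
    and f g :: "'a \<Rightarrow> ereal"
  assumes "SSDB bf"
    and "proper_fn f" and "convex_fn f" and "lsc_fn f" and "BC_fn bf f"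
    and "proper_fn g" and "convex_fn g" and "lsc_fn g" and "TBC_fn bf g"
  shows "{x - y | x y. x \<in> dom_fn f \<and> y \<in> dom_fn g} = UNIV \<longleftrightarrow>
         {x - y | x y. x \<in> Pq bf f \<and> y \<in> Nq bf g} = UNIV"
proof
  assume "{x - y | x y. x \<in> Pq bf f \<and> y \<in> Nq bf g} = UNIV"
  moreover have "Pq bf f \<subseteq> dom_fn f" "Nq bf g \<subseteq> dom_fn g" by (auto simp: Pq_def Nq_def dom_fn_def)
  ultimately show "{x - y | x y. x \<in> dom_fn f \<and> y \<in> dom_fn g} = UNIV" by blast
next
  assume H: "{x - y | x y. x \<in> dom_fn f \<and> y \<in> dom_fn g} = UNIV"
  have pf: "proper_fn f" and cf: "convex_fn f" and lf: "lsc_fn f" and pg: "proper_fn g" and cg: "convex_fn g"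
    and lg: "lsc_fn g" using assms by auto
  have bcf: "\<And>b. f b \<le> conj_at bf f b" "\<And>b. ereal (qf bf b) \<le> f b" using assms(5) by (auto simp: BC_fn_def)
  have bcg: "\<And>b. g b \<le> conj_at bf g (- b)" "\<And>b. ereal (- qf bf b) \<le> g b" using assms(9) by (auto simp: TBC_fn_def)
  obtain \<iota> :: "'a \<Rightarrow> ('a \<Rightarrow>\<^sub>L real)" where bil: "bilinear bf" and sym: "\<And>b c. bf b c = bf c b"
    and \<iota>: "surj \<iota>" "\<And>b c. blinfun_apply (\<iota> c) b = bf b c"
    using assms(1) unfolding SSDB_def by blast
  note bl = bilinear_ladd[OF bil] bilinear_radd[OF bil] bilinear_lsub[OF bil] bilinear_rsub[OF bil]
    bilinear_lneg[OF bil] bilinear_rneg[OF bil] bilinear_lmul[OF bil]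
  have q_add: "qf bf (a + b) = qf bf a + bf a b + qf bf b" for a b
    unfolding qf_def using sym[of b a] by (simp add: bl field_simps)
  have cont: "continuous_on UNIV (\<lambda>x. bf x c)" for c
  proof -
    have "(\<lambda>x. bf x c) = blinfun_apply (\<iota> c)" using \<iota>(2) by auto
    thus ?thesis by (simp add: linear_continuous_on blinfun.bounded_linear_right)
  qed
  show "{x - y | x y. x \<in> Pq bf f \<and> y \<in> Nq bf g} = UNIV"
  proof (rule set_eqI, rule iffI)
    fix c :: 'a
    define DF where "DF = {x. x + c \<in> dom_fn f}"
    define F where "F x = real_of_ereal (f (x + c)) - bf x c - qf bf c" for x
    define DG where "DG = dom_fn g"
    define G where "G y = real_of_ereal (g y)" for y
    have cF: "cvxR DF F" unfolding cvxR_def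
    proof (intro ballI allI impI)
      fix x y and t :: real assume x: "x \<in> DF" and y: "y \<in> DF" and t: "0 \<le> t \<and> t \<le> 1"
      have e: "t *\<^sub>R x + (1 - t) *\<^sub>R y + c = t *\<^sub>R (x + c) + (1 - t) *\<^sub>R (y + c)" by (simp add: algebra_simps)
      note cd = cvx_dom[OF pf cf x[unfolded DF_def, simplified] y[unfolded DF_def, simplified] conjunct1[OF t] conjunct2[OF t]]
      have b: "bf (t *\<^sub>R x + (1 - t) *\<^sub>R y) c = t * bf x c + (1 - t) * bf y c" by (simp add: bl)
      show "t *\<^sub>R x + (1 - t) *\<^sub>R y \<in> DF \<and> F (t *\<^sub>R x + (1 - t) *\<^sub>R y) \<le> t * F x + (1 - t) * F y"
        using cd unfolding DF_def F_def e b by (simp add: algebra_simps)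
    qed
    have cG: "cvxR DG G" unfolding cvxR_def DG_def G_def using cvx_dom[OF pg cg] by blast
    have clF: "closed {x\<in>DF. F x \<le> r}" for r
    proof -
      have "{x\<in>DF. F x \<le> r} = {x. f (x + c) \<le> ereal (r + bf x c + qf bf c)}"
      proof (rule set_eqI)
        fix x show "x \<in> {x\<in>DF. F x \<le> r} \<longleftrightarrow> x \<in> {x. f (x + c) \<le> ereal (r + bf x c + qf bf c)}"
          using pf unfolding DF_def F_def dom_fn_def proper_fn_def
          by (cases "f (x + c)") auto
      qed
      moreover have "closed {x. f (x + c) \<le> ereal (r + bf x c + qf bf c)}"
        by (rule lsc_closed_le[OF lsc_shift[OF lf]]) (intro continuous_intros cont)
      ultimately show ?thesis by simp
    qed
    have clG: "closed {x\<in>DG. G x \<le> r}" for r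
    proof -
      have "{x\<in>DG. G x \<le> r} = {x. g x \<le> ereal r}"
      proof (rule set_eqI)
        fix x show "x \<in> {x\<in>DG. G x \<le> r} \<longleftrightarrow> x \<in> {x. g x \<le> ereal r}"
          using pg unfolding DG_def G_def dom_fn_def proper_fn_def
          by (cases "g x") auto
      qed
      thus ?thesis using lg by (simp add: lsc_fn_def)
    qed
    have sur: "\<exists>x\<in>DF. \<exists>y\<in>DG. u = x - y" for u
    proof -
      have "u + c \<in> {x - y | x y. x \<in> dom_fn f \<and> y \<in> dom_fn g}" using H by simp
      then obtain x y where "x \<in> dom_fn f" "y \<in> dom_fn g" "u + c = x - y" by blast
      hence "x - c \<in> DF" "y \<in> DG" "u = (x - c) - y" by (auto simp: DF_def DG_def algebra_simps)
      thus ?thesis by blast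
    qed
    have diag: "0 \<le> F x + G x" if "x \<in> DF" "x \<in> DG" for x
    proof -
      have "ereal (qf bf (x + c)) \<le> f (x + c)" by (rule bcf(2))
      hence a: "qf bf (x + c) \<le> real_of_ereal (f (x + c))"
        using dom_real[OF pf, of "x + c"] that(1) by (simp add: DF_def) (metis ereal_less_eq(3))
      have "ereal (- qf bf x) \<le> g x" by (rule bcg(2))
      hence b: "- qf bf x \<le> real_of_ereal (g x)"
        using dom_real[OF pg, of x] that(2) by (simp add: DG_def) (metis ereal_less_eq(3))
      show ?thesis using a b q_add[of x c] unfolding F_def G_def by linarith
    qed
    obtain l where l: "bounded_linear l" "\<And>x y. x \<in> DF \<Longrightarrow> y \<in> DG \<Longrightarrow> l (x - y) \<le> F x + G y"
      using key_lemma[OF cF cG clF clG sur diag] by blast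
    obtain z where "Blinfun l = \<iota> z" using \<iota>(1) by (metis surjD)
    hence lz: "l b = bf b z" for b using \<iota>(2)[of z b] bounded_linear_Blinfun_apply[OF l(1)] by metis
    define w where "w = z + c"
    define \<kappa> where "\<kappa> = - qf bf c - bf c z"
    have ineq: "- bf y z - real_of_ereal (g y) \<le> real_of_ereal (f b) - bf b w - \<kappa>"
      if "b \<in> dom_fn f" "y \<in> dom_fn g" for b y
    proof -
      have "l ((b - c) - y) \<le> F (b - c) + G y" using that by (intro l(2)) (auto simp: DF_def DG_def)
      hence "bf ((b - c) - y) z \<le> real_of_ereal (f b) - bf (b - c) c - qf bf c + real_of_ereal (g y)"
        by (simp add: lz F_def G_def)
      moreover have "bf c c = 2 * qf bf c" by (simp add: qf_def)
      ultimately show ?thesis unfolding w_def \<kappa>_def using sym[of c z] by (simp add: bl)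
    qed
    have st1: "g z \<le> ereal (real_of_ereal (f b) - bf b w - \<kappa>)" if b: "b \<in> dom_fn f" for b
    proof -
      have "g z \<le> conj_at bf g (- z)" by (rule bcg(1))
      also have "\<dots> \<le> ereal (real_of_ereal (f b) - bf b w - \<kappa>)" unfolding conj_at_def
      proof (rule SUP_least)
        fix y
        show "ereal (bf y (- z)) - g y \<le> ereal (real_of_ereal (f b) - bf b w - \<kappa>)"
        proof (cases "y \<in> dom_fn g")
          case True
          hence "g y = ereal (real_of_ereal (g y))" by (rule dom_real[OF pg])
          moreover have "bf y (- z) - real_of_ereal (g y) \<le> real_of_ereal (f b) - bf b w - \<kappa>"
            using ineq[OF b True] by (simp add: bl)
          ultimately show ?thesis by (metis ereal_less_eq(3) ereal_minus(1))
        next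
          case False thus ?thesis using not_dom_inf[OF pg] by simp
        qed
      qed
      finally show ?thesis .
    qed
    have fw: "f w \<le> ereal (qf bf w)"
    proof -
      have "f w \<le> conj_at bf f w" by (rule bcf(1))
      also have "\<dots> \<le> ereal (qf bf w)" unfolding conj_at_def
      proof (rule SUP_least)
        fix b
        show "ereal (bf b w) - f b \<le> ereal (qf bf w)"
        proof (cases "b \<in> dom_fn f")
          case True
          have fb: "f b = ereal (real_of_ereal (f b))" by (rule dom_real[OF pf True])
          have "ereal (- qf bf z) \<le> ereal (real_of_ereal (f b) - bf b w - \<kappa>)"
            using bcg(2)[of z] st1[OF True] order_trans by blast
          hence "- qf bf z \<le> real_of_ereal (f b) - bf b w - \<kappa>" by simp
          moreover have "qf bf w = qf bf z + bf z c + qf bf c" unfolding w_def by (rule q_add)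
          ultimately have "bf b w - real_of_ereal (f b) \<le> qf bf w" unfolding \<kappa>_def using sym[of c z] by linarith
          thus ?thesis by (subst fb) simp
        next
          case False thus ?thesis using not_dom_inf[OF pf] by simp
        qed
      qed
      finally show ?thesis .
    qed
    have fw_eq: "f w = ereal (qf bf w)" using fw bcf(2)[of w] by (rule antisym)
    hence wdom: "w \<in> dom_fn f" by (auto simp: dom_fn_def)
    have "g z \<le> ereal (real_of_ereal (f w) - bf w w - \<kappa>)" by (rule st1[OF wdom])
    also have "real_of_ereal (f w) - bf w w - \<kappa> = - qf bf z"
    proof -
      have "bf w w = 2 * qf bf w" by (simp add: qf_def)
      moreover have "qf bf w = qf bf z + bf z c + qf bf c" unfolding w_def by (rule q_add)
      ultimately show ?thesis using fw_eq sym[of c z] unfolding \<kappa>_def by simp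
    qed
    finally have gz_eq: "g z = ereal (- qf bf z)" using bcg(2)[of z] by (intro antisym)
    have "w \<in> Pq bf f" "z \<in> Nq bf g" using fw_eq gz_eq by (auto simp: Pq_def Nq_def)
    moreover have "c = w - z" by (simp add: w_def)
    ultimately show "c \<in> {x - y | x y. x \<in> Pq bf f \<and> y \<in> Nq bf g}" by blast
  qed simp
qed

end
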